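(* Let $\mathcal{M}_n=\{\rho_\theta : \theta\in\Theta\}$, $\Theta\subset\mathbb{R}^n$ open, be a regular family of density matrices on $\mathbb{C}^d$ ($d<\infty$), with parameters split as $\theta=(\theta_I,\theta_N)$, $\theta_I=(\theta_1,\dots,\theta_m)$, $\theta_N=(\theta_{m+1},\dots,\theta_n)$, $m<n$. Fix a point $\theta$ and an $m\times m$ real symmetric matrix $W_I>0$. Define $$C_{\theta_I}[W_I]=\min_{\hat\Pi_I \text{ l.u. for } \theta_I}\mathrm{Tr}\big(W_I V_{\theta_I}[\hat\Pi_I]\big),\qquad C^{\mathcal{E}_\theta}_{\theta_I}[W_I]=\inf_{\hat\Pi\in\mathcal{E}_\theta}\mathrm{Tr}\big(W_I V_{\theta_I}[\hat\Pi]\big),$$ $$C^{\lim}_{\theta_I}[W_I]=\lim_{\epsilon\to0^+}C_\theta\big[W_I\oplus\epsilon I_{n-m}\big],\qquad\text{where } C_\theta[W_n]=\min_{\hat\Pi\in\mathcal{E}_\theta}\mathrm{Tr}\big(W_nV_\theta[\hat\Pi]\big)$$ for $n\times n$ weight matrices $W_n>0$, and $I_{n-m}$ is the $(n-m)\times(n-m)$ identity. Then $$C_{\theta_I}[W_I]=C^{\mathcal{E}_\theta}_{\theta_I}[W_I]=C^{\lim}_{\theta_I}[W_I].$$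
   Context: A POVM is a finite family $\Pi=\{\Pi_x\}_{x\in\mathcal{X}}$ of positive semidefinite $d\times d$ matrices summing to the identity; it gives the probability distribution $p_\theta(x\mid\Pi)=\mathrm{tr}(\rho_\theta\Pi_x)$, and $E_\theta[\,\cdot\mid\Pi]$ denotes expectation under it. A quantum estimator for all parameters is $\hat\Pi=(\Pi,\hat\theta)$ with $\hat\theta=(\hat\theta_1,\dots,\hat\theta_n)$ real functions on $\mathcal{X}$; its MSE matrix is $V_\theta[\hat\Pi]=\big[E_\theta[(\hat\theta_i(X)-\theta_i)(\hat\theta_j(X)-\theta_j)\mid\Pi]\big]_{i,j=1}^n$, and $V_{\theta_I}[\hat\Pi]$ denotes its upper-left $m\times m$ block (indices $1,\dots,m$). An estimator for the parameters of interest is $\hat\Pi_I=(\Pi,\hat\theta_I)$ with $\hat\theta_I=(\hat\theta_1,\dots,\hat\theta_m)$, with $m\times m$ MSE matrix $V_{\theta_I}[\hat\Pi_I]=\big[E_\theta[(\hat\theta_i(X)-\theta_i)(\hat\theta_j(X)-\theta_j)\mid\Pi]\big]_{i,j=1}^m$. $\hat\Pi_I$ is locally unbiased (l.u.) for $\theta_I$ at $\theta$ if $E_\theta[\hat\theta_i(X)\mid\Pi]=\theta_i$ and $\partial_{\theta_j}E_\theta[\hat\theta_i(X)\mid\Pi]=\delta_{ij}$ at $\theta$ for all $i\in\{1,\dots,m\}$, $j\in\{1,\dots,n\}$. $\mathcal{E}_\theta$ is the set of estimators $\hat\Pi=(\Pi,\hat\theta)$ that are locally unbiased for all parameters at $\theta$,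 i.e. the same two conditions hold for all $i,j\in\{1,\dots,n\}$. Regularity: the model is smooth, its derivatives $\partial_i\rho_\theta$ are linearly independent, and there exist POVMs whose classical models $\{p_\theta(\cdot\mid\Pi)\}$ are regular with linearly independent score functions $\partial_{\theta_i}\log p_\theta(x\mid\Pi)$, $i=1,\dots,n$, at $\theta$ (so that the minima above are taken over nonempty sets and are well defined). *)

theory Defs
  imports "HOL-Analysis.Analysis"
begin

definition ctrace :: "complex^'d^'d \<Rightarrow> complex" where
  "ctrace A = (\<Sum>i\<in>UNIV. A $ i $ i)"

definition cquad :: "complex^'d^'d \<Rightarrow> complex^'d \<Rightarrow> complex" where
  "cquad A v = (\<Sum>i\<in>UNIV. \<Sum>j\<in>UNIV. cnj (v $ i) * A $ i $ j * v $ j)"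

text \<open>Positive semidefinite (hence Hermitian) complex matrix.\<close>
definition psd :: "complex^'d^'d \<Rightarrow> bool" where
  "psd A \<longleftrightarrow> (\<forall>v. cquad A v \<in> \<real> \<and> 0 \<le> Re (cquad A v))"

definition density_matrix :: "complex^'d^'d \<Rightarrow> bool" where
  "density_matrix A \<longleftrightarrow> psd A \<and> ctrace A = 1"

definition is_povm :: "nat set \<Rightarrow> (nat \<Rightarrow> complex^'d^'d) \<Rightarrow> bool" where
  "is_povm X P \<longleftrightarrow> finite X \<and> (\<forall>x\<in>X. psd (P x)) \<and> (\<Sum>x\<in>X. P x) = mat 1"

definition pderiv_model ::
  "(real^'p \<Rightarrow> complex^'d^'d) \<Rightarrow> real^'p \<Rightarrow> 'p \<Rightarrow> complex^'d^'d" where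
  "pderiv_model \<rho> \<theta> j = vector_derivative (\<lambda>t. \<rho> (\<theta> + t *\<^sub>R axis j 1)) (at 0)"

definition regular_model ::
  "(real^'p) set \<Rightarrow> (real^'p \<Rightarrow> complex^'d^'d) \<Rightarrow> bool" where
  "regular_model \<Theta> \<rho> \<longleftrightarrow> open \<Theta> \<and> (\<forall>\<theta>\<in>\<Theta>. density_matrix (\<rho> \<theta>)) \<and>
     (\<exists>D. (\<forall>\<theta>\<in>\<Theta>. (\<rho> has_derivative D \<theta>) (at \<theta>)) \<and>
          (\<forall>j. continuous_on \<Theta> (\<lambda>\<theta>. D \<theta> (axis j 1)))) \<and>
     (\<forall>\<theta>\<in>\<Theta>. \<forall>c::'p \<Rightarrow> real.
        (\<Sum>j\<in>UNIV. c j *\<^sub>R pderiv_model \<rho> \<theta> j) = 0 \<longrightarrow> (\<forall>j. c j = 0))"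

definition prob ::
  "(real^'p \<Rightarrow> complex^'d^'d) \<Rightarrow> real^'p \<Rightarrow> (nat \<Rightarrow> complex^'d^'d) \<Rightarrow> nat \<Rightarrow> real" where
  "prob \<rho> \<theta> P x = Re (ctrace (\<rho> \<theta> ** P x))"

definition expect ::
  "(real^'p \<Rightarrow> complex^'d^'d) \<Rightarrow> real^'p \<Rightarrow> nat set \<Rightarrow> (nat \<Rightarrow> complex^'d^'d)
     \<Rightarrow> (nat \<Rightarrow> real) \<Rightarrow> real" where
  "expect \<rho> \<theta> X P f = (\<Sum>x\<in>X. f x * prob \<rho> \<theta> P x)"

definition regular_povm_at ::
  "(real^'p \<Rightarrow> complex^'d^'d) \<Rightarrow> real^'p \<Rightarrow> nat set \<Rightarrow> (nat \<Rightarrow> complex^'d^'d) \<Rightarrow> bool" where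
  "regular_povm_at \<rho> \<theta> X P \<longleftrightarrow> is_povm X P \<and> (\<forall>x\<in>X. 0 < prob \<rho> \<theta> P x) \<and>
     (\<forall>c::'p \<Rightarrow> real.
        (\<forall>x\<in>X. (\<Sum>j\<in>UNIV. c j *
            deriv (\<lambda>t. ln (prob \<rho> (\<theta> + t *\<^sub>R axis j 1) P x)) 0) = 0)
        \<longrightarrow> (\<forall>j. c j = 0))"

text \<open>Local unbiasedness at theta of the estimator components listed by idx
  (estimator component i estimates parameter idx i).\<close>
definition locally_unbiased ::
  "(real^'p \<Rightarrow> complex^'d^'d) \<Rightarrow> real^'p \<Rightarrow> ('q \<Rightarrow> 'p) \<Rightarrow> nat set \<Rightarrow> (nat \<Rightarrow> complex^'d^'d)
     \<Rightarrow> (nat \<Rightarrow> real^'q) \<Rightarrow> bool" where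
  "locally_unbiased \<rho> \<theta> idx X P est \<longleftrightarrow> is_povm X P \<and>
     (\<forall>i. expect \<rho> \<theta> X P (\<lambda>x. est x $ i) = \<theta> $ idx i \<and>
          (\<forall>j. ((\<lambda>t. expect \<rho> (\<theta> + t *\<^sub>R axis j 1) X P (\<lambda>x. est x $ i))
                  has_real_derivative (if j = idx i then 1 else 0)) (at 0)))"

definition mse ::
  "(real^'p \<Rightarrow> complex^'d^'d) \<Rightarrow> real^'p \<Rightarrow> ('q \<Rightarrow> 'p) \<Rightarrow> nat set \<Rightarrow> (nat \<Rightarrow> complex^'d^'d)
     \<Rightarrow> (nat \<Rightarrow> real^'q) \<Rightarrow> real^'q^'q" where
  "mse \<rho> \<theta> idx X P est = (\<chi> i j. expect \<rho> \<theta> X P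
      (\<lambda>x. (est x $ i - \<theta> $ idx i) * (est x $ j - \<theta> $ idx j)))"

definition rtrace_prod :: "real^'q^'q \<Rightarrow> real^'q^'q \<Rightarrow> real" where
  "rtrace_prod W V = (\<Sum>i\<in>UNIV. \<Sum>j\<in>UNIV. W $ i $ j * V $ j $ i)"

definition pos_def_sym :: "real^'q^'q \<Rightarrow> bool" where
  "pos_def_sym W \<longleftrightarrow> transpose W = W \<and> (\<forall>v. v \<noteq> 0 \<longrightarrow> 0 < v \<bullet> (W *v v))"

section \<open>The bounds; parameters are indexed by 'm + 'k: Inl i = theta_I, Inr j = theta_N\<close>

text \<open>C_theta[W] over estimators of all parameters that are l.u. for all parameters.\<close>
definition C_full ::
  "(real^('m::finite+'k::finite) \<Rightarrow> complex^'d^'d) \<Rightarrow> real^('m+'k) \<Rightarrow> real^('m+'k)^('m+'k) \<Rightarrow> real" where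
  "C_full \<rho> \<theta> W = Inf {rtrace_prod W (mse \<rho> \<theta> id X P est) | X P est.
       locally_unbiased \<rho> \<theta> id X P est}"

definition C_I ::
  "(real^('m::finite+'k::finite) \<Rightarrow> complex^'d^'d) \<Rightarrow> real^('m+'k) \<Rightarrow> real^'m^'m \<Rightarrow> real" where
  "C_I \<rho> \<theta> W = Inf {rtrace_prod W (mse \<rho> \<theta> Inl X P est) | X P (est :: nat \<Rightarrow> real^'m).
       locally_unbiased \<rho> \<theta> Inl X P est}"

text \<open>C^{E_theta}_{theta_I}[W_I]: estimators in E_theta, weighted only on the theta_I block.\<close>
definition C_I_E ::
  "(real^('m::finite+'k::finite) \<Rightarrow> complex^'d^'d) \<Rightarrow> real^('m+'k) \<Rightarrow> real^'m^'m \<Rightarrow> real" where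
  "C_I_E \<rho> \<theta> W = Inf {rtrace_prod W (\<chi> i j. mse \<rho> \<theta> id X P est $ Inl i $ Inl j) | X P est.
       locally_unbiased \<rho> \<theta> id X P est}"

definition dsum_eps :: "real^'m::finite^'m \<Rightarrow> real \<Rightarrow> real^('m+'k::finite)^('m+'k)" where
  "dsum_eps W \<epsilon> = (\<chi> a b. case (a, b) of
      (Inl i, Inl j) \<Rightarrow> W $ i $ j
    | (Inr i, Inr j) \<Rightarrow> (if i = j then \<epsilon> else 0)
    | _ \<Rightarrow> 0)"

end

theory Submission
  imports Defs
begin

lemma sum_if_const0: "(\<Sum>j\<in>A. if P then f j else 0) = (if P then sum f A else 0)"
  by simp

lemma cquad_axis_sub:
  fixes A :: "complex^'d^'d"
  shows "cquad A (v - axis k c) = cquad A v - cnj c * (\<Sum>j\<in>UNIV. A$k$j * v$j)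
     - (\<Sum>i\<in>UNIV. cnj (v$i) * A$i$k) * c + cnj c * A$k$k * c"
proof -
  have pt: "cnj ((v - axis k c)$i) * A$i$j * (v - axis k c)$j =
     cnj (v$i) * A$i$j * v$j - (if j = k then cnj (v$i) * A$i$j * c else 0)
     - (if i = k then cnj c * A$i$j * v$j else 0)
     + (if i = k then (if j = k then cnj c * A$i$j * c else 0) else 0)" for i j
    by (auto simp: axis_def algebra_simps)
  show ?thesis
    unfolding cquad_def pt
    by (simp add: sum.distrib sum_subtractf sum.delta sum_distrib_right sum_if_const0 sum_distrib_left mult.assoc)
qed

lemma cquad_axis2:
  fixes A :: "complex^'d^'d"
  assumes "k \<noteq> l"
  shows "cquad A (axis k a + axis l b) = cnj a * A$k$k * a + cnj a * A$k$l * b + cnj b * A$l$k * a + cnj b * A$l$l * b"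
proof -
  have pt: "cnj ((axis k a + axis l b)$i) * A$i$j * (axis k a + axis l b)$j =
     (if i = k then (if j = k then cnj a * A$i$j * a else 0) else 0)
   + (if i = k then (if j = l then cnj a * A$i$j * b else 0) else 0)
   + (if i = l then (if j = k then cnj b * A$i$j * a else 0) else 0)
   + (if i = l then (if j = l then cnj b * A$i$j * b else 0) else 0)" for i j
    using assms by (auto simp: axis_def algebra_simps)
  show ?thesis
    unfolding cquad_def pt
    by (simp add: sum.distrib sum.delta sum_if_const0)
qed

lemma cquad_axis1:
  fixes A :: "complex^'d^'d"
  shows "cquad A (axis k a) = cnj a * A$k$k * a"
proof -
  have pt: "cnj ((axis k a)$i) * A$i$j * (axis k a)$j =
     (if i = k then (if j = k then cnj a * A$i$j * a else 0) else 0)" for i j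
    by (auto simp: axis_def)
  show ?thesis unfolding cquad_def pt by (simp add: sum.delta sum_if_const0)
qed

lemma psd_diag:
  fixes A :: "complex^'d^'d"
  assumes "psd A"
  shows "A$k$k \<in> \<real>" "0 \<le> Re (A$k$k)"
  using assms[unfolded psd_def, rule_format, of "axis k 1"] by (auto simp: cquad_axis1)

lemma psd_herm:
  fixes A :: "complex^'d^'d"
  assumes "psd A"
  shows "A$i$j = cnj (A$j$i)"
proof (cases "i = j")
  case True
  then show ?thesis using psd_diag[OF assms, of i] by (simp add: Reals_cnj_iff)
next
  case False
  have "cquad A (axis i 1 + axis j 1) \<in> \<real>" using assms psd_def by blast
  then have r1: "A$i$i + A$i$j + A$j$i + A$j$j \<in> \<real>" using False by (simp add: cquad_axis2)
  have "cquad A (axis i 1 + axis j \<i>) \<in> \<real>" using assms psd_def by blast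
  then have r2: "A$i$i + \<i> * A$i$j - \<i> * A$j$i + A$j$j \<in> \<real>" using False
    by (simp add: cquad_axis2 algebra_simps)
  have d1: "Im (A$i$i) = 0" "Im (A$j$j) = 0" using psd_diag[OF assms] by (auto simp: complex_is_Real_iff)
  from r1 d1 have "Im (A$i$j) + Im (A$j$i) = 0" by (simp add: complex_is_Real_iff)
  moreover from r2 d1 have "Re (A$i$j) - Re (A$j$i) = 0" by (simp add: complex_is_Real_iff)
  ultimately show ?thesis by (simp add: complex_eq_iff)
qed

lemma psd_zero_row:
  fixes A :: "complex^'d^'d"
  assumes "psd A" "A$k$k = 0"
  shows "A$k$j = 0"
proof (rule ccontr)
  assume nz: "A$k$j \<noteq> 0"
  then have kj: "k \<noteq> j" using assms by auto
  define z where "z = A$k$j"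
  define n where "n = Re z ^ 2 + Im z ^ 2"
  have czz: "cnj z * z = of_real n" unfolding n_def by (simp add: complex_mult_cnj mult.commute)
  have "Re z \<noteq> 0 \<or> Im z \<noteq> 0" using nz by (auto simp: complex_eq_iff z_def)
  then have n: "n > 0" unfolding n_def by (simp add: sum_power2_gt_zero_iff)
  have hz: "A$j$k = cnj z" using psd_herm[OF assms(1), of j k] z_def by simp
  define t where "t = - (Re (A$j$j) + 1) / (2 * n)"
  have "0 \<le> Re (cquad A (axis k (of_real t * z) + axis j 1))" using assms(1) unfolding psd_def by blast
  also have "Re (cquad A (axis k (of_real t * z) + axis j 1)) = 2 * t * n + Re (A$j$j)"
  proof -
    have "cquad A (axis k (of_real t * z) + axis j 1) = of_real t * (cnj z * z) + of_real t * (cnj z * z) + A$j$j"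
    proof -
      have "cquad A (axis k (of_real t * z) + axis j 1) = cnj (of_real t * z) * A$k$k * (of_real t * z) + cnj (of_real t * z) * A$k$j * 1 + cnj 1 * A$j$k * (of_real t * z) + cnj 1 * A$j$j * 1"
        by (rule cquad_axis2[OF kj])
      also have "\<dots> = of_real t * (cnj z * z) + of_real t * (cnj z * z) + A$j$j"
        unfolding assms(2) hz z_def[symmetric] by (simp add: mult_ac)
      finally show ?thesis .
    qed
    then show ?thesis unfolding czz by simp
  qed
  also have "\<dots> = -1"
  proof -
    have "2 * t * n = - (Re (A$j$j) + 1)" unfolding t_def using n by simp
    then show ?thesis by linarith
  qed
  finally show False by simp
qed

lemma ctrace_mult: "ctrace (A ** B) = (\<Sum>i\<in>UNIV. \<Sum>l\<in>UNIV. A$i$l * B$l$i)"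
  unfolding ctrace_def matrix_matrix_mult_def by simp

lemma psd_schur:
  fixes A :: "complex^'d^'d"
  assumes A: "psd A" and a: "A$k$k \<noteq> 0"
  shows "psd (\<chi> i j. A$i$j - A$i$k * A$k$j / A$k$k)"
  unfolding psd_def
proof
  fix v :: "complex^'d"
  define a where "a = A$k$k"
  have ar: "cnj a = a" using psd_diag[OF A, of k] unfolding a_def by (simp add: Reals_cnj_iff)
  have a0: "a \<noteq> 0" using a a_def by simp
  define s where "s = (\<Sum>j\<in>UNIV. A$k$j * v$j)"
  have s': "(\<Sum>i\<in>UNIV. cnj (v$i) * A$i$k) = cnj s"
    unfolding s_def by (simp add: psd_herm[OF A, of _ k] mult.commute)
  define c where "c = s / a"
  have "cquad (\<chi> i j. A$i$j - A$i$k * A$k$j / A$k$k) v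
      = cquad A v - (\<Sum>i\<in>UNIV. cnj (v$i) * A$i$k) * (\<Sum>j\<in>UNIV. A$k$j * v$j) / a"
    unfolding cquad_def a_def
    by (simp add: algebra_simps sum_subtractf sum_distrib_left sum_distrib_right sum_divide_distrib)
  also have "\<dots> = cquad A v - cnj s * s / a" using s' s_def by simp
  also have "\<dots> = cquad A (v - axis k c)"
    unfolding cquad_axis_sub s' s_def[symmetric] a_def[symmetric] c_def
    using a0 ar by (simp add: field_simps)
  finally have eq: "cquad (\<chi> i j. A$i$j - A$i$k * A$k$j / A$k$k) v = cquad A (v - axis k c)" .
  show "cquad (\<chi> i j. A$i$j - A$i$k * A$k$j / A$k$k) v \<in> \<real> \<and>
        0 \<le> Re (cquad (\<chi> i j. A$i$j - A$i$k * A$k$j / A$k$k) v)"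
    unfolding eq using A psd_def by blast
qed

lemma trace_psd_aux:
  fixes B :: "complex^'d^'d"
  assumes "finite S" "psd B"
  shows "psd A \<Longrightarrow> (\<forall>i j. A$i$j \<noteq> 0 \<longrightarrow> i \<in> S \<and> j \<in> S) \<Longrightarrow> 0 \<le> Re (ctrace (A ** B))"
  using assms(1)
proof (induction S arbitrary: A rule: finite_induct)
  case empty
  then have "A = 0" by (simp add: vec_eq_iff)
  then show ?case by (simp add: ctrace_def)
next
  case (insert k S)
  show ?case
  proof (cases "A$k$k = 0")
    case True
    have r: "A$k$j = 0" for j using psd_zero_row[OF insert.prems(1) True] .
    have c: "A$j$k = 0" for j using psd_herm[OF insert.prems(1), of j k] r[of j] by simp
    have "\<forall>i j. A$i$j \<noteq> 0 \<longrightarrow> i \<in> S \<and> j \<in> S"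
      using insert.prems(2) r c by blast
    then show ?thesis using insert.IH insert.prems(1) by blast
  next
    case False
    define a where "a = A$k$k"
    define A' where "A' = (\<chi> i j. A$i$j - A$i$k * A$k$j / A$k$k)"
    have pA': "psd A'" unfolding A'_def by (rule psd_schur[OF insert.prems(1) False])
    have sA': "\<forall>i j. A'$i$j \<noteq> 0 \<longrightarrow> i \<in> S \<and> j \<in> S"
    proof (intro allI impI)
      fix i j assume nz: "A'$i$j \<noteq> 0"
      have "i \<noteq> k" using nz False unfolding A'_def by auto
      moreover have "j \<noteq> k" using nz False unfolding A'_def by auto
      moreover have "i \<in> insert k S"
      proof (rule ccontr)
        assume "i \<notin> insert k S"
        then have "A$i$j = 0" "A$i$k = 0" using insert.prems(2) by blast+
        then show False using nz unfolding A'_def by simp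
      qed
      moreover have "j \<in> insert k S"
      proof (rule ccontr)
        assume "j \<notin> insert k S"
        then have "A$i$j = 0" "A$k$j = 0" using insert.prems(2) by blast+
        then show False using nz unfolding A'_def by simp
      qed
      ultimately show "i \<in> S \<and> j \<in> S" by auto
    qed
    have ih: "0 \<le> Re (ctrace (A' ** B))" using insert.IH pA' sA' by blast
    define u where "u = (\<chi> l. A$l$k)"
    have "ctrace (A ** B) = ctrace (A' ** B) + (\<Sum>i\<in>UNIV. \<Sum>l\<in>UNIV. A$i$k * A$k$l / a * B$l$i)"
      unfolding ctrace_mult A'_def a_def by (simp add: sum.distrib[symmetric] left_diff_distrib)
    also have "(\<Sum>i\<in>UNIV. \<Sum>l\<in>UNIV. A$i$k * A$k$l / a * B$l$i) = cquad B u / a"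
    proof -
      have hc: "cnj (A$l$k) = A$k$l" for l using psd_herm[OF insert.prems(1), of k l] by (rule sym)
      have "(\<Sum>i\<in>UNIV. \<Sum>l\<in>UNIV. A$i$k * A$k$l / a * B$l$i) = (\<Sum>l\<in>UNIV. \<Sum>i\<in>UNIV. A$i$k * A$k$l / a * B$l$i)"
        by (rule sum.swap)
      also have "\<dots> = cquad B u / a" unfolding cquad_def u_def
        by (simp add: hc sum_divide_distrib mult_ac)
      finally show ?thesis .
    qed
    finally have eq: "ctrace (A ** B) = ctrace (A' ** B) + cquad B u / a" .
    have ar: "a = of_real (Re a)" "Re a > 0"
      using psd_diag[OF insert.prems(1), of k] False unfolding a_def
      by (auto simp: complex_is_Real_iff complex_eq_iff)
    have "0 \<le> Re (cquad B u)" using insert(4) psd_def \<open>psd B\<close> by blast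
    then have "0 \<le> Re (cquad B u / a)" using ar by (metis Re_divide_of_real divide_nonneg_pos)
    then show ?thesis unfolding eq using ih by simp
  qed
qed

lemma trace_psd_nonneg:
  fixes A B :: "complex^'d^'d"
  assumes "psd A" "psd B"
  shows "0 \<le> Re (ctrace (A ** B))"
  using trace_psd_aux[of UNIV B A] assms by auto


lemma ctrace_add: "ctrace (A + B) = ctrace A + ctrace B"
  unfolding ctrace_def by (simp add: sum.distrib)

lemma ctrace_scaleR: "ctrace (c *\<^sub>R A) = of_real c * ctrace A"
  unfolding ctrace_def by (simp only: vector_scaleR_component) (simp add: sum_distrib_left scaleR_conv_of_real)

lemma ctrace_sum_mult: "finite X \<Longrightarrow> ctrace (A ** sum P X) = (\<Sum>x\<in>X. ctrace (A ** P x))"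
proof (induction X rule: finite_induct)
  case empty
  then show ?case by (simp add: ctrace_def)
next
  case (insert x F)
  then show ?case by (simp add: matrix_add_ldistrib ctrace_add)
qed

lemma sum_prob:
  assumes "is_povm X P"
  shows "(\<Sum>x\<in>X. prob \<rho> \<theta> P x) = Re (ctrace (\<rho> \<theta>))"
proof -
  have "(\<Sum>x\<in>X. prob \<rho> \<theta> P x) = Re (\<Sum>x\<in>X. ctrace (\<rho> \<theta> ** P x))"
    unfolding prob_def by (simp add: Re_sum)
  also have "\<dots> = Re (ctrace (\<rho> \<theta> ** sum P X))"
    using assms unfolding is_povm_def by (subst ctrace_sum_mult) auto
  also have "\<dots> = Re (ctrace (\<rho> \<theta>))" using assms unfolding is_povm_def by simp
  finally show ?thesis .
qed

lemma prob_nonneg: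
  assumes "density_matrix (\<rho> \<theta>)" "is_povm X P" "x \<in> X"
  shows "0 \<le> prob \<rho> \<theta> P x"
  using assms trace_psd_nonneg unfolding prob_def density_matrix_def is_povm_def by blast

lemma expect_affine:
  "expect \<rho> \<theta> X P (\<lambda>x. a + b * f x) = a * (\<Sum>x\<in>X. prob \<rho> \<theta> P x) + b * expect \<rho> \<theta> X P f"
  unfolding expect_def by (simp add: algebra_simps sum.distrib sum_distrib_left)

lemma psd_scaleR: "psd A \<Longrightarrow> 0 \<le> c \<Longrightarrow> psd (c *\<^sub>R A)"
proof -
  assume A: "psd A" and c: "0 \<le> c"
  have eq: "cquad (c *\<^sub>R A) v = of_real c * cquad A v" for v
    unfolding cquad_def by (simp only: vector_scaleR_component) (simp add: sum_distrib_left scaleR_conv_of_real mult_ac)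
  show ?thesis using A c unfolding psd_def eq by auto
qed

lemma prob_scaleR: "prob \<rho> \<theta> (\<lambda>y. c *\<^sub>R Q y) x = c * prob \<rho> \<theta> Q x"
  unfolding prob_def by (simp add: matrix_scalar_ac scalar_matrix_assoc[symmetric] ctrace_scaleR)

lemma sum_mix:
  fixes g :: "nat \<Rightarrow> 'a::comm_monoid_add"
  assumes "finite X1" "finite X2"
  shows "sum g ((\<lambda>x. 2*x) ` X1 \<union> (\<lambda>x. 2*x+1) ` X2) = (\<Sum>x\<in>X1. g (2*x)) + (\<Sum>x\<in>X2. g (2*x+1))"
proof -
  have d: "(\<lambda>x. 2*x) ` X1 \<inter> (\<lambda>x. 2*x+1) ` X2 = {}" by auto presburger
  have "sum g ((\<lambda>x. 2*x) ` X1 \<union> (\<lambda>x. 2*x+1) ` X2) = sum g ((\<lambda>x. 2*x) ` X1) + sum g ((\<lambda>x. 2*x+1) ` X2)"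
    using assms d by (simp add: sum.union_disjoint)
  also have "\<dots> = (\<Sum>x\<in>X1. g (2*x)) + (\<Sum>x\<in>X2. g (2*x+1))"
    by (simp add: sum.reindex inj_on_def)
  finally show ?thesis .
qed

lemma prob_scaleR': "P y = c *\<^sub>R Q \<Longrightarrow> prob \<rho> \<theta> P y = c * Re (ctrace (\<rho> \<theta> ** Q))"
  unfolding prob_def by (simp add: matrix_scalar_ac scalar_matrix_assoc[symmetric] ctrace_scaleR)

lemma expect_const: "expect \<rho> \<theta> X P (\<lambda>x. c) = c * (\<Sum>x\<in>X. prob \<rho> \<theta> P x)"
  unfolding expect_def by (simp add: sum_distrib_left)

lemma expect_scale: "expect \<rho> \<theta> X P (\<lambda>x. c * f x) = c * expect \<rho> \<theta> X P f"
  unfolding expect_def by (simp add: sum_distrib_left mult_ac)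

lemma rtrace_scaleR: "rtrace_prod W (c *\<^sub>R M) = c * rtrace_prod W M"
  unfolding rtrace_prod_def by (simp add: sum_distrib_left mult_ac)

lemma mix_key: "0 < d \<Longrightarrow> 1/l + d = (1::real) \<Longrightarrow> 1/l * (a * T) + d * ((1 - 1/d) * a * T + 1/d * E) = E"
proof -
  assume d: "0 < d" "1/l + d = 1"
  have h: "d * ((1 - 1/d) * a * T + 1/d * E) = (d - 1) * (a*T) + E" using d(1) by (simp add: field_simps)
  have "1/l * (a*T) + ((d - 1) * (a*T) + E) = (1/l + d - 1) * (a*T) + E" by (simp add: algebra_simps)
  then show ?thesis unfolding h using d(2) by simp
qed
lemma mixture:
  fixes \<rho> :: "real^('m::finite+'k::finite) \<Rightarrow> complex^'d::finite^'d"
    and e1 :: "nat \<Rightarrow> real^'m" and e2 :: "nat \<Rightarrow> real^('m+'k)"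
  assumes lu1: "locally_unbiased \<rho> \<theta> Inl X1 P1 e1" and lu2: "locally_unbiased \<rho> \<theta> id X2 P2 e2"
    and lam: "1 < l"
  shows "\<exists>X P est. locally_unbiased \<rho> \<theta> id X P est \<and>
     rtrace_prod W (\<chi> i j. mse \<rho> \<theta> id X P est $ Inl i $ Inl j) = l * rtrace_prod W (mse \<rho> \<theta> Inl X1 P1 e1)"
proof -
  define d where "d = 1 - 1/l"
  have d: "0 < d" "0 < 1/l" "1/l + d = 1" using lam unfolding d_def by (auto simp: field_simps)
  define X where "X = (\<lambda>x. 2*x) ` X1 \<union> (\<lambda>x. 2*x+1) ` X2"
  define P where "P = (\<lambda>y::nat. if even y then (1/l) *\<^sub>R P1 (y div 2) else d *\<^sub>R P2 (y div 2))"
  define est where "est = (\<lambda>y::nat. if even y then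
      (\<chi> a. case a of Inl i \<Rightarrow> \<theta>$Inl i + l * (e1 (y div 2) $ i - \<theta> $ Inl i) | Inr j \<Rightarrow> \<theta> $ Inr j)
    else (\<chi> a. case a of Inl i \<Rightarrow> \<theta>$Inl i | Inr j \<Rightarrow> \<theta> $ Inr j + (e2 (y div 2) $ Inr j - \<theta> $ Inr j) / d))"
  have pv1: "is_povm X1 P1" and pv2: "is_povm X2 P2" using lu1 lu2 unfolding locally_unbiased_def by auto
  then have f1: "finite X1" and f2: "finite X2" unfolding is_povm_def by auto
  have P_e: "P (2*x) = (1/l) *\<^sub>R P1 x" and P_o: "P (2*x+1) = d *\<^sub>R P2 x" for x
    unfolding P_def by auto
  have est_e: "est (2*x) $ a = (case a of Inl i \<Rightarrow> \<theta>$Inl i + l * (e1 x $ i - \<theta> $ Inl i) | Inr j \<Rightarrow> \<theta> $ Inr j)"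
   and est_o: "est (2*x+1) $ a = (case a of Inl i \<Rightarrow> \<theta>$Inl i | Inr j \<Rightarrow> \<theta> $ Inr j + (e2 x $ Inr j - \<theta> $ Inr j) / d)"
   for x a unfolding est_def by auto
  have expmix: "expect \<rho> \<theta>' X P f = (1/l) * expect \<rho> \<theta>' X1 P1 (\<lambda>x. f (2*x)) + d * expect \<rho> \<theta>' X2 P2 (\<lambda>x. f (2*x+1))"
    for \<theta>' f
  proof -
    have pe: "prob \<rho> \<theta>' P (2*x) = (1/l) * prob \<rho> \<theta>' P1 x" for x
      using prob_scaleR'[of P "2*x", OF P_e] unfolding prob_def by simp
    have po: "prob \<rho> \<theta>' P (2*x+1) = d * prob \<rho> \<theta>' P2 x" for x
      using prob_scaleR'[of P "2*x+1", OF P_o] unfolding prob_def by simp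
    show ?thesis unfolding expect_def X_def sum_mix[OF f1 f2] pe po
      by (simp add: sum_distrib_left mult_ac)
  qed
  have T1: "(\<Sum>x\<in>X1. prob \<rho> \<theta>' P1 x) = Re (ctrace (\<rho> \<theta>'))" for \<theta>' by (rule sum_prob[OF pv1])
  have T2: "(\<Sum>x\<in>X2. prob \<rho> \<theta>' P2 x) = Re (ctrace (\<rho> \<theta>'))" for \<theta>' by (rule sum_prob[OF pv2])
  have Einl: "expect \<rho> \<theta>' X P (\<lambda>y. est y $ Inl i) = expect \<rho> \<theta>' X1 P1 (\<lambda>x. e1 x $ i)" for \<theta>' i
  proof -
    have a: "(\<lambda>x. est (2*x) $ Inl i) = (\<lambda>x. (1 - l) * \<theta>$Inl i + l * (e1 x $ i))"
      unfolding est_e by (auto simp: algebra_simps)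
    have b: "(\<lambda>x. est (2*x+1) $ Inl i) = (\<lambda>x. \<theta>$Inl i)" unfolding est_o by auto
    show ?thesis unfolding expmix a b expect_affine expect_const T1 T2
      using lam unfolding d_def by (simp add: field_simps)
  qed
  have Einr: "expect \<rho> \<theta>' X P (\<lambda>y. est y $ Inr j) = expect \<rho> \<theta>' X2 P2 (\<lambda>x. e2 x $ Inr j)" for \<theta>' j
  proof -
    have a: "(\<lambda>x. est (2*x) $ Inr j) = (\<lambda>x. \<theta>$Inr j)"
      by (auto simp: est_e)
    have b: "(\<lambda>x. est (2*x+1) $ Inr j) = (\<lambda>x. (1 - 1/d) * \<theta>$Inr j + (1/d) * (e2 x $ Inr j))"
      using d unfolding est_o by (auto simp: field_simps)
    show ?thesis unfolding expmix a b expect_affine expect_const T1 T2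
      by (rule mix_key[OF d(1) d(3)])
  qed
  have povm: "is_povm X P"
    unfolding is_povm_def
  proof (intro conjI)
    show "finite X" unfolding X_def using f1 f2 by simp
    show "\<forall>x\<in>X. psd (P x)"
      using pv1 pv2 d P_o unfolding X_def is_povm_def by (auto simp: P_e intro!: psd_scaleR)
    have "sum P X = (\<Sum>x\<in>X1. (1/l) *\<^sub>R P1 x) + (\<Sum>x\<in>X2. d *\<^sub>R P2 x)"
      unfolding X_def sum_mix[OF f1 f2] P_e P_o ..
    also have "\<dots> = (1/l) *\<^sub>R mat 1 + d *\<^sub>R mat 1"
      using pv1 pv2 unfolding is_povm_def by (simp add: scaleR_sum_right[symmetric])
    also have "\<dots> = mat 1" by (simp add: scaleR_add_left[symmetric] d(3))
    finally show "sum P X = mat 1" .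
  qed
  have lu: "locally_unbiased \<rho> \<theta> id X P est"
    unfolding locally_unbiased_def
  proof (rule conjI[OF povm], rule allI)
    fix a :: "'m + 'k"
    show "expect \<rho> \<theta> X P (\<lambda>x. est x $ a) = \<theta> $ id a \<and>
        (\<forall>j. ((\<lambda>t. expect \<rho> (\<theta> + t *\<^sub>R axis j 1) X P (\<lambda>x. est x $ a)) has_real_derivative
               (if j = id a then 1 else 0)) (at 0))"
    proof (cases a)
      case (Inl i)
      then show ?thesis using lu1 unfolding locally_unbiased_def by (simp add: Einl)
    next
      case (Inr j)
      then show ?thesis using lu2 unfolding locally_unbiased_def by (simp add: Einr)
    qed
  qed
  have mse: "(\<chi> i j. mse \<rho> \<theta> id X P est $ Inl i $ Inl j) = l *\<^sub>R mse \<rho> \<theta> Inl X1 P1 e1"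
  proof -
    have "mse \<rho> \<theta> id X P est $ Inl i $ Inl j = l * mse \<rho> \<theta> Inl X1 P1 e1 $ i $ j" for i j
    proof -
      have a: "(\<lambda>x. (est (2*x) $ Inl i - \<theta> $ Inl i) * (est (2*x) $ Inl j - \<theta> $ Inl j))
          = (\<lambda>x. (l * l) * ((e1 x $ i - \<theta> $ Inl i) * (e1 x $ j - \<theta> $ Inl j)))"
        unfolding est_e by (auto simp: algebra_simps)
      have b: "(\<lambda>x. (est (2*x+1) $ Inl i - \<theta> $ Inl i) * (est (2*x+1) $ Inl j - \<theta> $ Inl j)) = (\<lambda>x. 0)"
        unfolding est_o by auto
      have m1: "mse \<rho> \<theta> id X P est $ Inl i $ Inl j = expect \<rho> \<theta> X P (\<lambda>y. (est y $ Inl i - \<theta>$Inl i) * (est y $ Inl j - \<theta> $ Inl j))"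
        by (simp add: mse_def)
      have m2: "mse \<rho> \<theta> Inl X1 P1 e1 $ i $ j = expect \<rho> \<theta> X1 P1 (\<lambda>x. (e1 x $ i - \<theta>$Inl i) * (e1 x $ j - \<theta> $ Inl j))"
        by (simp add: mse_def)
      show ?thesis unfolding m1 m2 expmix a b expect_scale expect_const using lam by simp
    qed
    then show ?thesis by (simp add: vec_eq_iff)
  qed
  show ?thesis using lu mse rtrace_scaleR by metis
qed


lemma sum_swap3: "(\<Sum>i\<in>I. \<Sum>j\<in>J. \<Sum>x\<in>X. F i j x) = (\<Sum>x\<in>X. \<Sum>i\<in>I. \<Sum>j\<in>J. F i j x)"
proof -
  have "(\<Sum>i\<in>I. \<Sum>j\<in>J. \<Sum>x\<in>X. F i j x) = (\<Sum>i\<in>I. \<Sum>x\<in>X. \<Sum>j\<in>J. F i j x)"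
    by (rule sum.cong[OF refl], rule sum.swap)
  also have "\<dots> = (\<Sum>x\<in>X. \<Sum>i\<in>I. \<Sum>j\<in>J. F i j x)" by (rule sum.swap)
  finally show ?thesis .
qed

lemma rtrace_mse_nonneg:
  fixes W :: "real^'q^'q"
  assumes W: "pos_def_sym W" and p: "\<forall>x\<in>X. 0 \<le> prob \<rho> \<theta> P x"
  shows "0 \<le> rtrace_prod W (mse \<rho> \<theta> idx X P est)"
proof -
  define ev where "ev x = (\<chi> i. est x $ i - \<theta> $ idx i)" for x
  have e1: "rtrace_prod W (mse \<rho> \<theta> idx X P est) =
      (\<Sum>i\<in>UNIV. \<Sum>j\<in>UNIV. \<Sum>x\<in>X. prob \<rho> \<theta> P x * (ev x $ i * (W $ i $ j * ev x $ j)))"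
    unfolding rtrace_prod_def mse_def expect_def ev_def
    by (simp add: sum_distrib_left mult_ac)
  have e2: "(\<Sum>i\<in>UNIV. \<Sum>j\<in>UNIV. \<Sum>x\<in>X. prob \<rho> \<theta> P x * (ev x $ i * (W $ i $ j * ev x $ j))) = (\<Sum>x\<in>X. prob \<rho> \<theta> P x * (ev x \<bullet> (W *v ev x)))"
  proof -
    have q: "ev x \<bullet> (W *v ev x) = (\<Sum>i\<in>UNIV. \<Sum>j\<in>UNIV. ev x $ i * (W $ i $ j * ev x $ j))" for x
      unfolding inner_vec_def matrix_vector_mult_def by (simp add: sum_distrib_left)
    show ?thesis by (rule trans[OF sum_swap3]) (simp add: q sum_distrib_left)
  qed
  have e3: "0 \<le> (\<Sum>x\<in>X. prob \<rho> \<theta> P x * (ev x \<bullet> (W *v ev x)))"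
  proof (rule sum_nonneg)
    fix x assume "x \<in> X"
    have "0 \<le> ev x \<bullet> (W *v ev x)"
      using W unfolding pos_def_sym_def by (cases "ev x = 0") (auto intro: less_imp_le)
    then show "0 \<le> prob \<rho> \<theta> P x * (ev x \<bullet> (W *v ev x))" using p \<open>x \<in> X\<close> by simp
  qed
  show ?thesis using e1 e2 e3 by simp
qed

lemma lu_restrict:
  assumes "locally_unbiased \<rho> \<theta> id X P est"
  shows "locally_unbiased \<rho> \<theta> Inl X P (\<lambda>x. \<chi> i. est x $ Inl i)"
  using assms unfolding locally_unbiased_def by simp

lemma mse_restrict:
  "(\<chi> i j. mse \<rho> \<theta> id X P est $ Inl i $ Inl j) = mse \<rho> \<theta> Inl X P (\<lambda>x. \<chi> i. est x $ Inl i)"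
  unfolding mse_def by simp

lemma ifmult: "(if P then a else 0) * (b::real) = (if P then a * b else 0)" by simp

lemma rtrace_dsum:
  fixes W :: "real^'m::finite^'m" and V :: "real^('m+'k::finite)^('m+'k)"
  shows "rtrace_prod (dsum_eps W e :: real^('m+'k)^('m+'k)) V
     = rtrace_prod W (\<chi> i j. V $ Inl i $ Inl j) + e * (\<Sum>j\<in>UNIV. V $ Inr j $ Inr j)"
proof -
  have U: "sum f (UNIV :: ('m+'k) set) = sum (\<lambda>i. f (Inl i)) UNIV + sum (\<lambda>j. f (Inr j)) UNIV"
    for f :: "'m+'k \<Rightarrow> real"
  proof -
    have u: "(UNIV :: ('m+'k) set) = UNIV <+> UNIV" by simp
    have "sum f (UNIV :: ('m+'k) set) = sum f (UNIV <+> UNIV)" by (subst u) (rule refl)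
    also have "\<dots> = sum (f \<circ> Inl) UNIV + sum (f \<circ> Inr) UNIV" by (rule sum.Plus) simp_all
    finally show ?thesis by (simp add: comp_def)
  qed
  show ?thesis
    unfolding rtrace_prod_def dsum_eps_def U
    by (simp add: ifmult sum.delta sum_distrib_left)
qed

lemma mse_diag_nonneg:
  assumes "\<forall>x\<in>X. 0 \<le> prob \<rho> \<theta> P x"
  shows "0 \<le> mse \<rho> \<theta> idx X P est $ a $ a"
  using assms unfolding mse_def expect_def by (auto intro!: sum_nonneg)


lemma radd: "((M::complex^'d::finite^'d) + N) ** Q = M ** Q + N ** Q"
  by (simp add: matrix_matrix_mult_def vec_eq_iff distrib_right sum.distrib)

lemma bl_trace: "bounded_linear (\<lambda>M::complex^'d::finite^'d. Re (ctrace (M ** Q)))"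
proof -
  have "linear (\<lambda>M::complex^'d^'d. Re (ctrace (M ** Q)))"
  proof (rule linearI)
    fix M N :: "complex^'d^'d" and c :: real
    show "Re (ctrace ((M + N) ** Q)) = Re (ctrace (M ** Q)) + Re (ctrace (N ** Q))"
      by (simp add: radd ctrace_add)
    show "Re (ctrace ((c *\<^sub>R M) ** Q)) = c *\<^sub>R Re (ctrace (M ** Q))"
      by (simp add: scalar_matrix_assoc[symmetric] ctrace_scaleR)
  qed
  then show ?thesis by (simp add: linear_conv_bounded_linear)
qed

lemma prob_line_deriv:
  fixes \<rho> :: "real^'p::finite \<Rightarrow> complex^'d::finite^'d"
  assumes rm: "regular_model \<Theta> \<rho>" and th: "\<theta> \<in> \<Theta>"
  shows "((\<lambda>t. prob \<rho> (\<theta> + t *\<^sub>R axis j 1) P x) has_real_derivative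
           deriv (\<lambda>t. prob \<rho> (\<theta> + t *\<^sub>R axis j 1) P x) 0) (at 0)"
proof -
  obtain D where D: "\<forall>\<theta>\<in>\<Theta>. (\<rho> has_derivative D \<theta>) (at \<theta>)" using rm unfolding regular_model_def by blast
  have l: "((\<lambda>t::real. \<theta> + t *\<^sub>R axis j 1) has_derivative (\<lambda>t. t *\<^sub>R axis j 1)) (at 0)"
    by (auto intro!: derivative_eq_intros)
  have D0: "(\<rho> has_derivative D \<theta>) (at ((\<lambda>t::real. \<theta> + t *\<^sub>R axis j 1) 0))" using D th by simp
  have "((\<lambda>t. \<rho> (\<theta> + t *\<^sub>R axis j 1)) has_derivative (\<lambda>t. D \<theta> (t *\<^sub>R axis j 1))) (at 0)"
    using has_derivative_compose[OF l D0] .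
  from bounded_linear.has_derivative[OF bl_trace this, of "P x"]
  have "((\<lambda>t. prob \<rho> (\<theta> + t *\<^sub>R axis j 1) P x) has_derivative (\<lambda>t. Re (ctrace (D \<theta> (t *\<^sub>R axis j 1) ** P x)))) (at 0)"
    unfolding prob_def .
  then have "(\<lambda>t. prob \<rho> (\<theta> + t *\<^sub>R axis j 1) P x) differentiable (at 0)"
    by (rule differentiableI)
  then show ?thesis by (simp add: DERIV_deriv_iff_real_differentiable)
qed

lemma sum_deriv_zero:
  fixes \<rho> :: "real^'p::finite \<Rightarrow> complex^'d::finite^'d"
  assumes rm: "regular_model \<Theta> \<rho>" and th: "\<theta> \<in> \<Theta>" and pv: "is_povm X P"
  shows "(\<Sum>x\<in>X. deriv (\<lambda>t. prob \<rho> (\<theta> + t *\<^sub>R axis j 1) P x) 0) = 0"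
proof -
  have h1: "((\<lambda>t. \<Sum>x\<in>X. prob \<rho> (\<theta> + t *\<^sub>R axis j 1) P x) has_real_derivative
      (\<Sum>x\<in>X. deriv (\<lambda>t. prob \<rho> (\<theta> + t *\<^sub>R axis j 1) P x) 0)) (at 0)"
    by (rule DERIV_sum) (rule prob_line_deriv[OF rm th])
  have op: "open \<Theta>" using rm unfolding regular_model_def by blast
  obtain r where r: "0 < r" "ball \<theta> r \<subseteq> \<Theta>" using open_contains_ball_eq[OF op] th by blast
  have "eventually (\<lambda>t. t \<in> ball 0 r) (nhds (0::real))"
    by (rule eventually_nhds_in_open) (use r in auto)
  then have ev: "eventually (\<lambda>t. (\<Sum>x\<in>X. prob \<rho> (\<theta> + t *\<^sub>R axis j 1) P x) = 1) (nhds 0)"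
  proof (rule eventually_mono)
    fix t :: real assume "t \<in> ball 0 r"
    then have "\<theta> + t *\<^sub>R axis j 1 \<in> ball \<theta> r" by (simp add: dist_norm norm_axis_1)
    then have "\<theta> + t *\<^sub>R axis j 1 \<in> \<Theta>" using r by blast
    then have "density_matrix (\<rho> (\<theta> + t *\<^sub>R axis j 1))" using rm unfolding regular_model_def by blast
    then show "(\<Sum>x\<in>X. prob \<rho> (\<theta> + t *\<^sub>R axis j 1) P x) = 1"
      unfolding sum_prob[OF pv] density_matrix_def by simp
  qed
  have h2: "((\<lambda>t. \<Sum>x\<in>X. prob \<rho> (\<theta> + t *\<^sub>R axis j 1) P x) has_real_derivative 0) (at 0)"
    using DERIV_cong_ev[OF refl ev refl] DERIV_const by blast
  show ?thesis using DERIV_unique[OF h1 h2] .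
qed

lemma aff_swap:
  "(\<Sum>x\<in>X. ((a::real) + (\<Sum>k\<in>U. c k * f k x)) * g x) = a * (\<Sum>x\<in>X. g x) + (\<Sum>k\<in>U. c k * (\<Sum>x\<in>X. f k x * g x))"
proof -
  have "(\<Sum>x\<in>X. (a + (\<Sum>k\<in>U. c k * f k x)) * g x) = (\<Sum>x\<in>X. a * g x) + (\<Sum>x\<in>X. \<Sum>k\<in>U. c k * (f k x * g x))"
  proof -
    have "(a + (\<Sum>k\<in>U. c k * f k x)) * g x = a * g x + (\<Sum>k\<in>U. c k * (f k x * g x))" for x
      by (simp add: distrib_right sum_distrib_right mult.assoc)
    then show ?thesis by (simp add: sum.distrib)
  qed
  also have "(\<Sum>x\<in>X. \<Sum>k\<in>U. c k * (f k x * g x)) = (\<Sum>k\<in>U. \<Sum>x\<in>X. c k * (f k x * g x))" by (rule sum.swap)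
  finally show ?thesis by (simp add: sum_distrib_left)
qed

lemma exists_lu:
  fixes \<rho> :: "real^'p::finite \<Rightarrow> complex^'d::finite^'d"
  assumes rm: "regular_model \<Theta> \<rho>" and th: "\<theta> \<in> \<Theta>" and rp: "regular_povm_at \<rho> \<theta> X P"
  shows "\<exists>est. locally_unbiased \<rho> \<theta> id X P est"
proof -
  have pv: "is_povm X P" and pos0: "\<forall>x\<in>X. 0 < prob \<rho> \<theta> P x"
    and indep: "\<forall>c::'p \<Rightarrow> real. (\<forall>x\<in>X. (\<Sum>j\<in>UNIV. c j *
            deriv (\<lambda>t. ln (prob \<rho> (\<theta> + t *\<^sub>R axis j 1) P x)) 0) = 0) \<longrightarrow> (\<forall>j. c j = 0)"
    using rp unfolding regular_povm_at_def by blast+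
  have fin: "finite X" using pv unfolding is_povm_def by blast
  define p where "p x = prob \<rho> \<theta> P x" for x
  have pos: "\<forall>x\<in>X. 0 < p x" using pos0 p_def by simp
  define d where "d j x = deriv (\<lambda>t. prob \<rho> (\<theta> + t *\<^sub>R axis j 1) P x) 0" for j x
  define s where "s j x = deriv (\<lambda>t. ln (prob \<rho> (\<theta> + t *\<^sub>R axis j 1) P x)) 0" for j x
  have hd: "((\<lambda>t. prob \<rho> (\<theta> + t *\<^sub>R axis j 1) P x) has_real_derivative d j x) (at 0)" for j x
    unfolding d_def by (rule prob_line_deriv[OF rm th])
  have sd: "d j x = p x * s j x" if "x \<in> X" for j x
  proof -
    have g0: "(\<lambda>t. prob \<rho> (\<theta> + t *\<^sub>R axis j 1) P x) 0 = p x" by (simp add: p_def)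
    have "(ln has_real_derivative inverse (p x)) (at ((\<lambda>t. prob \<rho> (\<theta> + t *\<^sub>R axis j 1) P x) 0))"
      unfolding g0 by (rule DERIV_ln) (use pos that in blast)
    from DERIV_chain2[OF this hd]
    have "((\<lambda>t. ln (prob \<rho> (\<theta> + t *\<^sub>R axis j 1) P x)) has_real_derivative inverse (p x) * d j x) (at 0)" .
    then have "s j x = inverse (p x) * d j x" unfolding s_def by (rule DERIV_imp_deriv)
    moreover have "0 < p x" using pos that by blast
    ultimately show ?thesis by (simp add: field_simps)
  qed
  have dsum0: "(\<Sum>x\<in>X. d j x) = 0" for j unfolding d_def by (rule sum_deriv_zero[OF rm th pv])
  have dm: "density_matrix (\<rho> \<theta>)" using rm th unfolding regular_model_def by blast
  have psum: "(\<Sum>x\<in>X. p x) = 1" unfolding p_def sum_prob[OF pv] using dm unfolding density_matrix_def by simp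
  define J :: "real^'p^'p" where "J = (\<chi> j k. \<Sum>x\<in>X. p x * s j x * s k x)"
  have inj: "\<forall>v. J *v v = 0 \<longrightarrow> v = 0"
  proof (intro allI impI)
    fix v :: "real^'p" assume Jv: "J *v v = 0"
    define u where "u x = (\<Sum>j\<in>UNIV. v$j * s j x)" for x
    have quad: "v \<bullet> (J *v v) = (\<Sum>x\<in>X. p x * (u x * u x))"
    proof -
      have "v \<bullet> (J *v v) = (\<Sum>j\<in>UNIV. \<Sum>k\<in>UNIV. \<Sum>x\<in>X. p x * ((v$j * s j x) * (v$k * s k x)))"
        unfolding inner_vec_def matrix_vector_mult_def J_def by (simp add: sum_distrib_left sum_distrib_right mult_ac)
      also have "\<dots> = (\<Sum>x\<in>X. \<Sum>j\<in>UNIV. \<Sum>k\<in>UNIV. p x * ((v$j * s j x) * (v$k * s k x)))" by (rule sum_swap3)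
      also have "\<dots> = (\<Sum>x\<in>X. p x * (u x * u x))" unfolding u_def sum_product by (simp add: sum_distrib_left)
      finally show ?thesis .
    qed
    have z: "(\<Sum>x\<in>X. p x * (u x * u x)) = 0" using quad Jv by simp
    have nn: "0 \<le> p x * (u x * u x)" if "x \<in> X" for x using pos that by (simp add: less_imp_le)
    have "\<forall>x\<in>X. p x * (u x * u x) = 0"
      using z sum_nonneg_eq_0_iff[OF fin, of "\<lambda>x. p x * (u x * u x)"] nn by blast
    then have "\<forall>x\<in>X. u x = 0" using pos by (metis less_irrefl mult_eq_0_iff)
    then have "\<forall>j. v$j = 0" using indep[rule_format, of "\<lambda>j. v$j"] unfolding u_def s_def by blast
    then show "v = 0" by (simp add: vec_eq_iff)
  qed
  obtain K where K: "K ** J = mat 1" using inj matrix_left_invertible_injective vec.inj_iff_eq_0 by metis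
  define est where "est x = (\<chi> i. \<theta>$i + (\<Sum>k\<in>UNIV. K$i$k * s k x))" for x
  have lu: "locally_unbiased \<rho> \<theta> id X P est" unfolding locally_unbiased_def
  proof (rule conjI[OF pv], rule allI)
    fix i
    have E0: "expect \<rho> \<theta> X P (\<lambda>x. est x $ i) = \<theta> $ i"
    proof -
      have "expect \<rho> \<theta> X P (\<lambda>x. est x $ i) = (\<Sum>x\<in>X. (\<theta>$i + (\<Sum>k\<in>UNIV. K$i$k * s k x)) * p x)"
        unfolding expect_def est_def p_def by simp
      also have "\<dots> = \<theta>$i * (\<Sum>x\<in>X. p x) + (\<Sum>k\<in>UNIV. K$i$k * (\<Sum>x\<in>X. s k x * p x))" by (rule aff_swap)
      also have "\<dots> = \<theta> $ i"
      proof -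
        have sk: "(\<Sum>x\<in>X. s k x * p x) = (\<Sum>x\<in>X. d k x)" for k using sd by (simp add: mult.commute)
        show ?thesis unfolding sk dsum0 psum by simp
      qed
      finally show ?thesis .
    qed
    have D: "((\<lambda>t. expect \<rho> (\<theta> + t *\<^sub>R axis j 1) X P (\<lambda>x. est x $ i)) has_real_derivative
               (if j = id i then 1 else 0)) (at 0)" for j
    proof -
      have "((\<lambda>t. expect \<rho> (\<theta> + t *\<^sub>R axis j 1) X P (\<lambda>x. est x $ i)) has_real_derivative
               (\<Sum>x\<in>X. est x $ i * d j x)) (at 0)"
        unfolding expect_def by (rule DERIV_sum, rule DERIV_cmult, rule hd)
      also have "(\<Sum>x\<in>X. est x $ i * d j x) = (if j = id i then 1 else 0)"
      proof -
        have "(\<Sum>x\<in>X. est x $ i * d j x) = (\<Sum>x\<in>X. (\<theta>$i + (\<Sum>k\<in>UNIV. K$i$k * s k x)) * d j x)"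
          unfolding est_def by simp
        also have "\<dots> = \<theta>$i * (\<Sum>x\<in>X. d j x) + (\<Sum>k\<in>UNIV. K$i$k * (\<Sum>x\<in>X. s k x * d j x))" by (rule aff_swap)
        also have "\<dots> = \<theta>$i * (\<Sum>x\<in>X. d j x) + (\<Sum>k\<in>UNIV. K$i$k * J $ k $ j)"
        proof -
          have sk: "(\<Sum>x\<in>X. s k x * d j x) = J $ k $ j" for k
            unfolding J_def using sd by (simp add: mult_ac)
          show ?thesis unfolding sk ..
        qed
        also have "\<theta>$i * (\<Sum>x\<in>X. d j x) + (\<Sum>k\<in>UNIV. K$i$k * J $ k $ j) = (K ** J) $ i $ j"
          using dsum0 by (simp add: matrix_matrix_mult_def)
        also have "\<dots> = (if j = id i then 1 else 0)" using K by (simp add: mat_def)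
        finally show ?thesis .
      qed
      finally show ?thesis .
    qed
    show "expect \<rho> \<theta> X P (\<lambda>x. est x $ i) = \<theta> $ id i \<and>
        (\<forall>j. ((\<lambda>t. expect \<rho> (\<theta> + t *\<^sub>R axis j 1) X P (\<lambda>x. est x $ i)) has_real_derivative
               (if j = id i then 1 else 0)) (at 0))" using E0 D by simp
  qed
  then show ?thesis by blast
qed


lemma le_from_scaled: assumes "\<forall>l>1. c \<le> l * (a::real)" "0 \<le> a" shows "c \<le> a"
proof (rule ccontr)
  assume "\<not> c \<le> a" then have ca: "a < c" by simp
  show False
  proof (cases "a = 0")
    case True then show False using assms(1)[rule_format, of 2] ca by simp
  next
    case False
    then have a0: "0 < a" using assms(2) by simp
    define l where "l = (a + c) / (2 * a)"
    have "1 < l" using a0 ca unfolding l_def by (simp add: field_simps)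
    then have "c \<le> l * a" using assms(1) by blast
    also have "l * a = (a + c) / 2" using a0 unfolding l_def by (simp add: field_simps)
    finally show False using ca by simp
  qed
qed

theorem theorem1:
  fixes \<Theta> :: "(real^('m::finite + 'k::finite)) set"
    and \<rho> :: "real^('m + 'k) \<Rightarrow> complex^'d::finite^'d"
    and \<theta> :: "real^('m + 'k)"
    and W :: "real^'m^'m"
  assumes "regular_model \<Theta> \<rho>"
    and "\<theta> \<in> \<Theta>"
    and "\<exists>X P. regular_povm_at \<rho> \<theta> X P"
    and "pos_def_sym W"
  shows "C_I \<rho> \<theta> W = C_I_E \<rho> \<theta> W
       \<and> ((\<lambda>\<epsilon>. C_full \<rho> \<theta> (dsum_eps W \<epsilon>)) \<longlongrightarrow> C_I \<rho> \<theta> W) (at_right 0)"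
proof -
  obtain X0 P0 where "regular_povm_at \<rho> \<theta> X0 P0" using assms(3) by blast
  then obtain est0 where lu0: "locally_unbiased \<rho> \<theta> id X0 P0 est0"
    using exists_lu assms(1,2) by blast
  have dm: "density_matrix (\<rho> \<theta>)" using assms(1,2) unfolding regular_model_def by blast
  have pnn: "\<forall>x\<in>X. 0 \<le> prob \<rho> \<theta> P x" if "locally_unbiased \<rho> \<theta> idx X P est" for idx :: "'q::finite \<Rightarrow> 'm + 'k" and X P est
    using that prob_nonneg[of \<rho> \<theta>, OF dm] unfolding locally_unbiased_def by blast
  define SI where "SI = {rtrace_prod W (mse \<rho> \<theta> Inl X P est) | X P (est :: nat \<Rightarrow> real^'m).
       locally_unbiased \<rho> \<theta> Inl X P est}"
  define SE where "SE = {rtrace_prod W (\<chi> i j. mse \<rho> \<theta> id X P est $ Inl i $ Inl j) | X P est.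
       locally_unbiased \<rho> \<theta> id X P est}"
  have CI: "C_I \<rho> \<theta> W = Inf SI" unfolding C_I_def SI_def ..
  have CE: "C_I_E \<rho> \<theta> W = Inf SE" unfolding C_I_E_def SE_def ..
  have SE_ne: "SE \<noteq> {}" using lu0 unfolding SE_def by blast
  have SE_sub: "SE \<subseteq> SI"
  proof
    fix a assume "a \<in> SE"
    then obtain X P est where lu: "locally_unbiased \<rho> \<theta> id X P est"
      and a: "a = rtrace_prod W (\<chi> i j. mse \<rho> \<theta> id X P est $ Inl i $ Inl j)" unfolding SE_def by blast
    then have "a = rtrace_prod W (mse \<rho> \<theta> Inl X P (\<lambda>x. \<chi> i. est x $ Inl i))" by (simp add: mse_restrict)
    then show "a \<in> SI" unfolding SI_def using lu_restrict[OF lu] by blast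
  qed
  have SI_ne: "SI \<noteq> {}" using SE_ne SE_sub by blast
  have SI_nn: "\<forall>a\<in>SI. 0 \<le> a" unfolding SI_def
    using rtrace_mse_nonneg[OF assms(4)] pnn by blast
  have SE_nn: "\<forall>a\<in>SE. 0 \<le> a" using SI_nn SE_sub by blast
  have SI_bdd: "bdd_below SI" using SI_nn by (meson bdd_below.I)
  have SE_bdd: "bdd_below SE" using SE_nn by (meson bdd_below.I)
  have le1: "Inf SI \<le> Inf SE" by (rule cInf_superset_mono[OF SE_ne SI_bdd SE_sub])
  have le2: "Inf SE \<le> Inf SI"
  proof (rule cInf_greatest[OF SI_ne])
    fix a assume "a \<in> SI"
    then obtain X1 P1 and e1 :: "nat \<Rightarrow> real^'m" where lu1: "locally_unbiased \<rho> \<theta> Inl X1 P1 e1"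
      and a: "a = rtrace_prod W (mse \<rho> \<theta> Inl X1 P1 e1)" unfolding SI_def by blast
    have "\<forall>l>1. Inf SE \<le> l * a"
    proof (intro allI impI)
      fix l :: real assume "1 < l"
      from mixture[OF lu1 lu0 this, of W] obtain X P est where
        "locally_unbiased \<rho> \<theta> id X P est"
        "rtrace_prod W (\<chi> i j. mse \<rho> \<theta> id X P est $ Inl i $ Inl j) = l * a" unfolding a by blast
      then have "l * a \<in> SE" unfolding SE_def by force
      then show "Inf SE \<le> l * a" by (rule cInf_lower[OF _ SE_bdd])
    qed
    then show "Inf SE \<le> a" using le_from_scaled SI_nn \<open>a \<in> SI\<close> by blast
  qed
  have eq: "Inf SI = Inf SE" using le1 le2 by simp
  define g where "g = (\<lambda>\<epsilon>. C_full \<rho> \<theta> (dsum_eps W \<epsilon>))"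
  have decomp: "rtrace_prod (dsum_eps W e :: real^('m+'k)^('m+'k)) (mse \<rho> \<theta> id X P est)
      = rtrace_prod W (\<chi> i j. mse \<rho> \<theta> id X P est $ Inl i $ Inl j) + e * (\<Sum>j\<in>UNIV. mse \<rho> \<theta> id X P est $ Inr j $ Inr j)"
    for e X P est by (rule rtrace_dsum)
  have glow: "Inf SE \<le> g e" if "0 < e" for e
  proof -
    have "Inf SE \<le> Inf {rtrace_prod (dsum_eps W e) (mse \<rho> \<theta> id X P est) | X P est.
       locally_unbiased \<rho> \<theta> id X P est}"
    proof (rule cInf_greatest)
      show "{rtrace_prod (dsum_eps W e) (mse \<rho> \<theta> id X P est) | X P est.
       locally_unbiased \<rho> \<theta> id X P est} \<noteq> {}" using lu0 by blast
      fix b assume "b \<in> {rtrace_prod (dsum_eps W e) (mse \<rho> \<theta> id X P est) | X P est.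
       locally_unbiased \<rho> \<theta> id X P est}"
      then obtain X P est where lu: "locally_unbiased \<rho> \<theta> id X P est"
        and b: "b = rtrace_prod (dsum_eps W e) (mse \<rho> \<theta> id X P est)" by blast
      have "rtrace_prod W (\<chi> i j. mse \<rho> \<theta> id X P est $ Inl i $ Inl j) \<in> SE"
        using lu unfolding SE_def by blast
      then have "Inf SE \<le> rtrace_prod W (\<chi> i j. mse \<rho> \<theta> id X P est $ Inl i $ Inl j)"
        by (rule cInf_lower[OF _ SE_bdd])
      moreover have "0 \<le> (\<Sum>j\<in>UNIV. mse \<rho> \<theta> id X P est $ Inr j $ Inr j)"
        by (intro sum_nonneg mse_diag_nonneg pnn[OF lu])
      ultimately show "Inf SE \<le> b" unfolding b decomp using that by (simp add: add_increasing2)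
    qed
    then show ?thesis unfolding g_def C_full_def .
  qed
  have gup: "g e \<le> rtrace_prod W (\<chi> i j. mse \<rho> \<theta> id X P est $ Inl i $ Inl j) + e * (\<Sum>j\<in>UNIV. mse \<rho> \<theta> id X P est $ Inr j $ Inr j)"
    if "locally_unbiased \<rho> \<theta> id X P est" "0 < e" for e X P est
  proof -
    have bdd: "bdd_below {rtrace_prod (dsum_eps W e) (mse \<rho> \<theta> id X P est) | X P est.
       locally_unbiased \<rho> \<theta> id X P est}"
    proof (rule bdd_below.I)
      fix b assume "b \<in> {rtrace_prod (dsum_eps W e) (mse \<rho> \<theta> id X P est) | X P est.
       locally_unbiased \<rho> \<theta> id X P est}"
      then obtain X P est where lu: "locally_unbiased \<rho> \<theta> id X P est"
        and b: "b = rtrace_prod (dsum_eps W e) (mse \<rho> \<theta> id X P est)" by blast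
      have "rtrace_prod W (\<chi> i j. mse \<rho> \<theta> id X P est $ Inl i $ Inl j) \<in> SE"
        using lu unfolding SE_def by blast
      then have "Inf SE \<le> rtrace_prod W (\<chi> i j. mse \<rho> \<theta> id X P est $ Inl i $ Inl j)"
        by (rule cInf_lower[OF _ SE_bdd])
      moreover have "0 \<le> (\<Sum>j\<in>UNIV. mse \<rho> \<theta> id X P est $ Inr j $ Inr j)"
        by (intro sum_nonneg mse_diag_nonneg pnn[OF lu])
      ultimately show "Inf SE \<le> b" unfolding b decomp using \<open>0 < e\<close> by (simp add: add_increasing2)
    qed
    have "g e \<le> rtrace_prod (dsum_eps W e) (mse \<rho> \<theta> id X P est)"
      unfolding g_def C_full_def using that(1) by (intro cInf_lower[OF _ bdd]) blast
    then show ?thesis unfolding decomp .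
  qed
  have lim: "(g \<longlongrightarrow> Inf SE) (at_right 0)"
    unfolding tendsto_iff
  proof (intro allI impI)
    fix r :: real assume r: "0 < r"
    obtain b where "b \<in> SE" "b < Inf SE + r/2" using cInf_lessD[OF SE_ne, of "Inf SE + r/2"] r by auto
    then obtain X P est where lu: "locally_unbiased \<rho> \<theta> id X P est"
      and b: "b = rtrace_prod W (\<chi> i j. mse \<rho> \<theta> id X P est $ Inl i $ Inl j)"
      and bl: "b < Inf SE + r/2" unfolding SE_def by blast
    define t where "t = (\<Sum>j\<in>UNIV. mse \<rho> \<theta> id X P est $ Inr j $ Inr j)"
    have t0: "0 \<le> t" unfolding t_def by (intro sum_nonneg mse_diag_nonneg pnn[OF lu])
    have "eventually (\<lambda>x. x \<in> {0<..<r / (2 * (t + 1))}) (at_right (0::real))"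
      by (rule eventually_at_right_real) (use r t0 in simp)
    then show "eventually (\<lambda>x. dist (g x) (Inf SE) < r) (at_right 0)"
    proof (rule eventually_mono)
      fix x assume x: "x \<in> {0<..<r / (2 * (t + 1))}"
      then have x0: "0 < x" by simp
      have "x * t \<le> x * (t + 1)" using x0 by simp
      also have "x * (t + 1) < r / 2" using x t0 by (simp add: field_simps)
      finally have xt: "x * t < r / 2" .
      have "g x \<le> b + x * t" using gup[OF lu x0] unfolding b t_def .
      moreover have "Inf SE \<le> g x" using glow[OF x0] .
      ultimately show "dist (g x) (Inf SE) < r" using xt bl by (simp add: dist_real_def)
    qed
  qed
  show ?thesis unfolding CI CE eq using lim unfolding g_def by simp
qed

end
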